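(* Consider a complete 4-node network with nodes $A,B,C,D$, where for each ordered pair of distinct nodes $(X,Y)$ the directed link $XY$ has capacity $XY>0$. Define \[ I^*=\min\{BA+CA,BA+DA,CA+DA,AB+CB,AB+DB,CB+DB,AC+BC,AC+DC,BC+DC,AD+BD,AD+CD,BD+CD\}, \] and for distinct nodes $X,Y$ write $\widehat{XY}=XY+YX$. Then for any positive value $R<I^*$, there is a set of three distinct nodes $\{X,Y,Z\}$ such that $\widehat{XY}>R$ and $\widehat{XZ}>R$.
   Context: Here $XY$ denotes the capacity (maximum number of bits per unit time) of the directed link from node $X$ to node $Y$. *)

theory Defs
  imports Main "HOL.Real"
begin

datatype node = A | B | C | D

definition Istar :: "(node \<Rightarrow> node \<Rightarrow> real) \<Rightarrow> real" where
  "Istar c = Min {c B A + c C A, c B A + c D A, c C A + c D A,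
                  c A B + c C B, c A B + c D B, c C B + c D B,
                  c A C + c B C, c A C + c D C, c B C + c D C,
                  c A D + c B D, c A D + c C D, c B D + c C D}"

definition hatcap :: "(node \<Rightarrow> node \<Rightarrow> real) \<Rightarrow> node \<Rightarrow> node \<Rightarrow> real" where
  "hatcap c X Y = c X Y + c Y X"

end

theory Submission
  imports Defs
begin

theorem corollary1:
  fixes c :: "node \<Rightarrow> node \<Rightarrow> real" and R :: real
  assumes pos: "\<And>X Y. X \<noteq> Y \<Longrightarrow> c X Y > 0"
    and R_pos: "R > 0"
    and R_lt: "R < Istar c"
  shows "\<exists>X Y Z. X \<noteq> Y \<and> X \<noteq> Z \<and> Y \<noteq> Z \<and>
                 hatcap c X Y > R \<and> hatcap c X Z > R"
proof (rule ccontr)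
  assume N: "\<not> ?thesis"
  have m: "\<And>x. x \<in> {c B A + c C A, c B A + c D A, c C A + c D A,
                  c A B + c C B, c A B + c D B, c C B + c D B,
                  c A C + c B C, c A C + c D C, c B C + c D C,
                  c A D + c B D, c A D + c C D, c B D + c C D} \<Longrightarrow> R < x"
    using R_lt unfolding Istar_def by (meson Min_le finite.emptyI finite.insertI less_le_trans)
  have h: "\<And>X Y Z. X \<noteq> Y \<Longrightarrow> X \<noteq> Z \<Longrightarrow> Y \<noteq> Z \<Longrightarrow> hatcap c X Y \<le> R \<or> hatcap c X Z \<le> R"
    using N by force
  note i = m[of "c B A + c C A"] m[of "c B A + c D A"] m[of "c C A + c D A"]
    m[of "c A B + c C B"] m[of "c A B + c D B"] m[of "c C B + c D B"]
    m[of "c A C + c B C"] m[of "c A C + c D C"] m[of "c B C + c D C"]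
    m[of "c A D + c B D"] m[of "c A D + c C D"] m[of "c B D + c C D"]
  have i2: "R < c B A + c C A" "R < c B A + c D A" "R < c C A + c D A"
    "R < c A B + c C B" "R < c A B + c D B" "R < c C B + c D B"
    "R < c A C + c B C" "R < c A C + c D C" "R < c B C + c D C"
    "R < c A D + c B D" "R < c A D + c C D" "R < c B D + c C D"
    using i by simp_all
  have hs: "hatcap c X Y = hatcap c Y X" for X Y unfolding hatcap_def by simp
  have M1: "\<not> (hatcap c A C \<le> R \<and> hatcap c A D \<le> R \<and> hatcap c B C \<le> R \<and> hatcap c B D \<le> R)"
    using i2 unfolding hatcap_def by linarith
  have M2: "\<not> (hatcap c A B \<le> R \<and> hatcap c A D \<le> R \<and> hatcap c B C \<le> R \<and> hatcap c C D \<le> R)"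
    using i2 unfolding hatcap_def by linarith
  have M3: "\<not> (hatcap c A B \<le> R \<and> hatcap c A C \<le> R \<and> hatcap c B D \<le> R \<and> hatcap c C D \<le> R)"
    using i2 unfolding hatcap_def by linarith
  have nAB: "hatcap c A B \<le> R"
  proof (rule ccontr)
    assume g: "\<not> ?thesis"
    have "hatcap c A C \<le> R" using h[of A B C] g by auto
    moreover have "hatcap c A D \<le> R" using h[of A B D] g by auto
    moreover have "hatcap c B C \<le> R" using h[of B A C] g hs[of A B] by auto
    moreover have "hatcap c B D \<le> R" using h[of B A D] g hs[of A B] by auto
    ultimately show False using M1 by auto
  qed
  have nAC: "hatcap c A C \<le> R"
  proof (rule ccontr)
    assume g: "\<not> ?thesis"
    have "hatcap c A D \<le> R" using h[of A C D] g by auto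
    moreover have "hatcap c C B \<le> R" using h[of C A B] g hs[of A C] by auto
    moreover have "hatcap c C D \<le> R" using h[of C A D] g hs[of A C] by auto
    ultimately show False using M2 nAB hs[of C B] by auto
  qed
  have nAD: "hatcap c A D \<le> R"
  proof (rule ccontr)
    assume g: "\<not> ?thesis"
    have "hatcap c D B \<le> R" using h[of D A B] g hs[of A D] by auto
    moreover have "hatcap c D C \<le> R" using h[of D A C] g hs[of A D] by auto
    ultimately show False using M3 nAB nAC hs[of D B] hs[of D C] by auto
  qed
  show False
  proof (cases "hatcap c B C \<le> R")
    case True
    then show False
    proof (cases "hatcap c B D \<le> R")
      case True
      then show False using M1 nAC nAD \<open>hatcap c B C \<le> R\<close> by auto
    next
      case False
      then have "hatcap c D C \<le> R" using h[of D B C] hs[of B D] by auto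
      then show False using M2 nAB nAD True hs[of D C] by auto
    qed
  next
    case False
    then have "hatcap c B D \<le> R" using h[of B C D] by auto
    moreover have "hatcap c C D \<le> R" using h[of C B D] False hs[of B C] by auto
    ultimately show False using M3 nAB nAC by auto
  qed
qed

end
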